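(* Consider the two-species BGK system and its mild solutions as described in the context. If $(f_1,f_2)$ is a mild solution with $f_1,f_2\ge0$ and the initial data satisfy $$\gamma_k(x,t):=\int f_k^0(x-vt,v)\,dv\ge C_0>0$$ for all $t\ge0$ (and all $x$), $k=1,2$, with a constant $C_0>0$, then the densities satisfy, for all $t\ge0$, $x$, and $k\neq j\in\{1,2\}$, $$n_k(x,t)\ge C_0e^{-(\tilde\nu_{kk}+\tilde\nu_{kj})t}.$$
   Context: Fix $N\ge1$, masses $m_1,m_2>0$, $\varepsilon\in(0,1]$, $\alpha\in[0,1]$, $\delta$ with $\frac{\frac{m_1}{m_2}\varepsilon-1}{1+\frac{m_1}{m_2}\varepsilon}\le\delta\le 1$, and $\gamma$ with $0\le\gamma\le\frac{m_1}{N}(1-\delta)\big[(1+\frac{m_1}{m_2}\varepsilon)\delta+1-\frac{m_1}{m_2}\varepsilon\big]$, and constants $\tilde\nu_{11},\tilde\nu_{12},\tilde\nu_{21},\tilde\nu_{22}>0$. For $f_k(x,v,t)\ge0$ define $n_k=\int f_k\,dv$, $n_ku_k=\int vf_k\,dv$, $Nn_kT_k=\int m_k|v-u_k|^2f_k\,dv$, and $u_{12}=\delta u_1+(1-\delta)u_2$, $u_{21}=u_2-\frac{m_1}{m_2}\varepsilon(1-\delta)(u_2-u_1)$, $T_{12}=\alpha T_1+(1-\alpha)T_2+\gamma|u_1-u_2|^2$, $T_{21}=\big[\frac1N\varepsilon m_1(1-\delta)(\frac{m_1}{m_2}\varepsilon(\delta-1)+\delta+1)-\varepsilon\gamma\big]|u_1-u_2|^2+\varepsilon(1-\alpha)T_1+(1-\varepsilon(1-\alpha))T_2$.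 Maxwellians: $M_k=\frac{n_k}{(2\pi T_k/m_k)^{N/2}}e^{-\frac{|v-u_k|^2}{2T_k/m_k}}$, $M_{12}=\frac{n_1}{(2\pi T_{12}/m_1)^{N/2}}e^{-\frac{|v-u_{12}|^2}{2T_{12}/m_1}}$, $M_{21}=\frac{n_2}{(2\pi T_{21}/m_2)^{N/2}}e^{-\frac{|v-u_{21}|^2}{2T_{21}/m_2}}$. The system, with collision frequencies $\nu_{jk}n_k=\tilde\nu_{jk}\frac{n_k}{n_1+n_2}$, is $\partial_tf_1+v\cdot\nabla_xf_1=\nu_{11}n_1(M_1-f_1)+\nu_{12}n_2(M_{12}-f_1)$, $\partial_tf_2+v\cdot\nabla_xf_2=\nu_{22}n_2(M_2-f_2)+\nu_{21}n_1(M_{21}-f_2)$, $f_k(t=0)=f_k^0$. Mild solution: $(f_1,f_2)$ with $f_k\ge0$, $(1+|v|^2)f_k\in L^1$, such that for $k\neq j$, writing $\rho_k=\frac{n_k}{n_1+n_2}$ and $y_s=x+(s-t)v$, $f_k(x,v,t)=e^{-a_k(x,v,t)}f_k^0(x-tv,v)+e^{-a_k(x,v,t)}\int_0^t\big[\tilde\nu_{kk}\rho_k(y_s,s)M_k(y_s,v,s)+\tilde\nu_{kj}\rho_j(y_s,s)M_{kj}(y_s,v,s)\big]e^{a_k(y_s,v,s)}\,ds$, where $a_k(x,v,t)=\int_0^t\big[\tilde\nu_{kk}\rho_k(y_s,s)+\tilde\nu_{kj}\rho_j(y_s,s)\big]ds$. *)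

theory Defs
  imports "HOL-Analysis.Analysis"
begin

text \<open>Distribution functions are written f x v t with x, v in real^'n (N = CARD('n)).\<close>

type_synonym 'n distr = "real^'n \<Rightarrow> real^'n \<Rightarrow> real \<Rightarrow> real"

definition ndens :: "'n::finite distr \<Rightarrow> real^'n \<Rightarrow> real \<Rightarrow> real" where
  "ndens f x t = (\<integral>v. f x v t \<partial>lborel)"

definition uvel :: "'n::finite distr \<Rightarrow> real^'n \<Rightarrow> real \<Rightarrow> real^'n" where
  "uvel f x t = inverse (ndens f x t) *\<^sub>R (\<integral>v. f x v t *\<^sub>R v \<partial>lborel)"

definition temp :: "real \<Rightarrow> 'n::finite distr \<Rightarrow> real^'n \<Rightarrow> real \<Rightarrow> real" where
  "temp m f x t = (\<integral>v. m * (norm (v - uvel f x t))\<^sup>2 * f x v t \<partial>lborel)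
                  / (real CARD('n) * ndens f x t)"

definition Maxwell :: "real \<Rightarrow> real \<Rightarrow> real^'n::finite \<Rightarrow> real \<Rightarrow> real^'n \<Rightarrow> real" where
  "Maxwell m n u T v = n / (2 * pi * T / m) powr (real CARD('n) / 2)
                       * exp (- (norm (v - u))\<^sup>2 / (2 * T / m))"

definition u12 :: "real \<Rightarrow> real^'n::finite \<Rightarrow> real^'n \<Rightarrow> real^'n" where
  "u12 \<delta> u1 u2 = \<delta> *\<^sub>R u1 + (1 - \<delta>) *\<^sub>R u2"

definition u21 :: "real \<Rightarrow> real \<Rightarrow> real \<Rightarrow> real \<Rightarrow> real^'n::finite \<Rightarrow> real^'n \<Rightarrow> real^'n" where
  "u21 m1 m2 \<epsilon> \<delta> u1 u2 = u2 - (m1 / m2 * \<epsilon> * (1 - \<delta>)) *\<^sub>R (u2 - u1)"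

definition T12 :: "real \<Rightarrow> real \<Rightarrow> real \<Rightarrow> real \<Rightarrow> real^'n::finite \<Rightarrow> real^'n \<Rightarrow> real" where
  "T12 \<alpha> \<gamma> T1 T2 u1 u2 = \<alpha> * T1 + (1 - \<alpha>) * T2 + \<gamma> * (norm (u1 - u2))\<^sup>2"

definition T21 :: "real \<Rightarrow> real \<Rightarrow> real \<Rightarrow> real \<Rightarrow> real \<Rightarrow> real \<Rightarrow> real \<Rightarrow> real
                   \<Rightarrow> real^'n::finite \<Rightarrow> real^'n \<Rightarrow> real" where
  "T21 m1 m2 \<epsilon> \<alpha> \<delta> \<gamma> T1 T2 u1 u2 =
     (1 / real CARD('n) * \<epsilon> * m1 * (1 - \<delta>) * (m1 / m2 * \<epsilon> * (\<delta> - 1) + \<delta> + 1) - \<epsilon> * \<gamma>)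
       * (norm (u1 - u2))\<^sup>2
     + \<epsilon> * (1 - \<alpha>) * T1 + (1 - \<epsilon> * (1 - \<alpha>)) * T2"

definition rho :: "'n::finite distr \<Rightarrow> 'n distr \<Rightarrow> real^'n \<Rightarrow> real \<Rightarrow> real" where
  "rho f g x t = ndens f x t / (ndens f x t + ndens g x t)"

definition acoef :: "real \<Rightarrow> real \<Rightarrow> 'n::finite distr \<Rightarrow> 'n distr \<Rightarrow> real^'n \<Rightarrow> real^'n \<Rightarrow> real \<Rightarrow> real" where
  "acoef \<nu>kk \<nu>kj f g x v t =
     (LINT s:{0..t}|lborel. \<nu>kk * rho f g (x + (s - t) *\<^sub>R v) s + \<nu>kj * rho g f (x + (s - t) *\<^sub>R v) s)"

text \<open>Mild formulation for one species: f own distribution, g partner, f0 initial datum,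
  Mk, Mkj the Maxwellians (as functions of x v t).\<close>
definition mild_eq :: "real \<Rightarrow> real \<Rightarrow> 'n::finite distr \<Rightarrow> 'n distr \<Rightarrow> (real^'n \<Rightarrow> real^'n \<Rightarrow> real)
                       \<Rightarrow> 'n distr \<Rightarrow> 'n distr \<Rightarrow> bool" where
  "mild_eq \<nu>kk \<nu>kj f g f0 Mk Mkj \<longleftrightarrow>
    (\<forall>x v t. t \<ge> 0 \<longrightarrow>
       f x v t = exp (- acoef \<nu>kk \<nu>kj f g x v t) * f0 (x - t *\<^sub>R v) v
         + exp (- acoef \<nu>kk \<nu>kj f g x v t) *
           (LINT s:{0..t}|lborel.
              (\<nu>kk * rho f g (x + (s - t) *\<^sub>R v) s * Mk (x + (s - t) *\<^sub>R v) v s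
               + \<nu>kj * rho g f (x + (s - t) *\<^sub>R v) s * Mkj (x + (s - t) *\<^sub>R v) v s)
              * exp (acoef \<nu>kk \<nu>kj f g (x + (s - t) *\<^sub>R v) v s)))"

definition mild_solution ::
  "real \<Rightarrow> real \<Rightarrow> real \<Rightarrow> real \<Rightarrow> real \<Rightarrow> real \<Rightarrow> real \<Rightarrow> real \<Rightarrow> real \<Rightarrow> real \<Rightarrow>
   (real^'n::finite \<Rightarrow> real^'n \<Rightarrow> real) \<Rightarrow> (real^'n \<Rightarrow> real^'n \<Rightarrow> real) \<Rightarrow>
   'n distr \<Rightarrow> 'n distr \<Rightarrow> bool" where
  "mild_solution m1 m2 \<epsilon> \<alpha> \<delta> \<gamma> \<nu>11 \<nu>12 \<nu>21 \<nu>22 f10 f20 f1 f2 \<longleftrightarrow>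
    (\<forall>x v t. t \<ge> 0 \<longrightarrow> f1 x v t \<ge> 0 \<and> f2 x v t \<ge> 0) \<and>
    (\<forall>x t. t \<ge> 0 \<longrightarrow> integrable lborel (\<lambda>v. (1 + (norm v)\<^sup>2) * f1 x v t)
                    \<and> integrable lborel (\<lambda>v. (1 + (norm v)\<^sup>2) * f2 x v t)) \<and>
    mild_eq \<nu>11 \<nu>12 f1 f2 f10
      (\<lambda>x v t. Maxwell m1 (ndens f1 x t) (uvel f1 x t) (temp m1 f1 x t) v)
      (\<lambda>x v t. Maxwell m1 (ndens f1 x t) (u12 \<delta> (uvel f1 x t) (uvel f2 x t))
                 (T12 \<alpha> \<gamma> (temp m1 f1 x t) (temp m2 f2 x t) (uvel f1 x t) (uvel f2 x t)) v) \<and>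
    mild_eq \<nu>22 \<nu>21 f2 f1 f20
      (\<lambda>x v t. Maxwell m2 (ndens f2 x t) (uvel f2 x t) (temp m2 f2 x t) v)
      (\<lambda>x v t. Maxwell m2 (ndens f2 x t) (u21 m1 m2 \<epsilon> \<delta> (uvel f1 x t) (uvel f2 x t))
                 (T21 m1 m2 \<epsilon> \<alpha> \<delta> \<gamma> (temp m1 f1 x t) (temp m2 f2 x t) (uvel f1 x t) (uvel f2 x t)) v)"

end

theory Submission
  imports Defs
begin

lemma ndens_nonneg:
  assumes "\<forall>v. f x v t \<ge> 0"
  shows "ndens f x t \<ge> 0"
  unfolding ndens_def using assms by (intro integral_nonneg_AE) auto

lemma rho_bounds:
  assumes "ndens f x t \<ge> 0" "ndens g x t \<ge> 0"
  shows "rho f g x t \<ge> 0 \<and> rho f g x t \<le> 1"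
  using assms unfolding rho_def
  by (cases "ndens f x t + ndens g x t = 0") (auto simp: divide_simps)

lemma Maxwell_nonneg:
  assumes "n \<ge> 0"
  shows "Maxwell m n u T v \<ge> 0"
  unfolding Maxwell_def using assms by simp

lemma key:
  fixes f g :: "'n::finite distr" and finit :: "real^'n \<Rightarrow> real^'n \<Rightarrow> real"
  assumes me: "mild_eq a b f g finit Mk Mkj"
    and ab: "a > 0" "b > 0"
    and fg: "\<forall>x v t. t \<ge> 0 \<longrightarrow> f x v t \<ge> 0 \<and> g x v t \<ge> 0"
    and M: "\<And>x v s. s \<ge> 0 \<Longrightarrow> Mk x v s \<ge> 0 \<and> Mkj x v s \<ge> 0"
    and int: "integrable lborel (\<lambda>v. (1 + (norm v)\<^sup>2) * f x v t)"
    and t: "t \<ge> 0"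
    and C0: "C0 > 0" "(\<integral>v. finit (x - t *\<^sub>R v) v \<partial>lborel) \<ge> C0"
  shows "ndens f x t \<ge> C0 * exp (- (a + b) * t)"
proof -
  have rb: "\<And>y s. s \<ge> 0 \<Longrightarrow> rho f g y s \<ge> 0 \<and> rho f g y s \<le> 1 \<and> rho g f y s \<ge> 0 \<and> rho g f y s \<le> 1"
    using rho_bounds ndens_nonneg fg by metis
  define c where "c = exp (- (a + b) * t)"
  have c0: "c > 0" unfolding c_def by simp
  have pt: "f x v t \<ge> c * finit (x - t *\<^sub>R v) v" for v
  proof -
    define A where "A = acoef a b f g x v t"
    define I where "I = (LINT s:{0..t}|lborel.
              (a * rho f g (x + (s - t) *\<^sub>R v) s * Mk (x + (s - t) *\<^sub>R v) v s
               + b * rho g f (x + (s - t) *\<^sub>R v) s * Mkj (x + (s - t) *\<^sub>R v) v s)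
              * exp (acoef a b f g (x + (s - t) *\<^sub>R v) v s))"
    have eq: "f x v t = exp (- A) * finit (x - t *\<^sub>R v) v + exp (- A) * I"
      using me t unfolding mild_eq_def A_def I_def by blast
    have I0: "I \<ge> 0"
      unfolding I_def set_lebesgue_integral_def
    proof (intro integral_nonneg_AE AE_I2)
      fix s
      show "0 \<le> indicator {0..t} s *\<^sub>R ((a * rho f g (x + (s - t) *\<^sub>R v) s * Mk (x + (s - t) *\<^sub>R v) v s
               + b * rho g f (x + (s - t) *\<^sub>R v) s * Mkj (x + (s - t) *\<^sub>R v) v s)
              * exp (acoef a b f g (x + (s - t) *\<^sub>R v) v s))"
      proof (cases "s \<in> {0..t}")
        case True
        hence s: "s \<ge> 0" by auto
        from rb[OF s, of "x + (s - t) *\<^sub>R v"] M[OF s, of "x + (s - t) *\<^sub>R v" v] ab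
        show ?thesis using True by (simp add: indicator_def)
      next
        case False
        then show ?thesis by simp
      qed
    qed
    have Ab: "A \<le> (a + b) * t"
    proof -
      have "A \<le> (\<integral>s. indicator {0..t} s *\<^sub>R (a + b) \<partial>lborel)"
        unfolding A_def acoef_def set_lebesgue_integral_def
      proof (rule integral_mono')
        show "integrable lborel (\<lambda>s. indicator {0..t} s *\<^sub>R (a + b))"
          using t by (intro integrable_scaleR_left integrable_real_indicator) (auto simp: emeasure_lborel_Icc)
      next
        fix s :: real
        show "0 \<le> indicator {0..t} s *\<^sub>R (a + b)" using ab by (simp add: indicator_def)
        show "indicator {0..t} s *\<^sub>R (a * rho f g (x + (s - t) *\<^sub>R v) s + b * rho g f (x + (s - t) *\<^sub>R v) s)
              \<le> indicator {0..t} s *\<^sub>R (a + b)"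
        proof (cases "s \<in> {0..t}")
          case True
          hence s: "s \<ge> 0" by auto
          from rb[OF s, of "x + (s - t) *\<^sub>R v"] ab
          have "a * rho f g (x + (s - t) *\<^sub>R v) s \<le> a" "b * rho g f (x + (s - t) *\<^sub>R v) s \<le> b"
            by (simp_all add: mult_left_le)
          then show ?thesis using True by (simp add: indicator_def)
        next
          case False
          then show ?thesis by simp
        qed
      qed
      also have "\<dots> = (a + b) * t" using t by simp
      finally show ?thesis .
    qed
    have ec: "c \<le> exp (- A)" unfolding c_def using Ab by (simp add: algebra_simps)
    have fnn: "f x v t \<ge> 0" using fg t by blast
    show ?thesis
    proof (cases "finit (x - t *\<^sub>R v) v \<ge> 0")
      case True
      have "c * finit (x - t *\<^sub>R v) v \<le> exp (- A) * finit (x - t *\<^sub>R v) v"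
        using ec True by (simp add: mult_right_mono)
      also have "\<dots> \<le> f x v t" using eq I0 by simp
      finally show ?thesis .
    next
      case False
      hence "c * finit (x - t *\<^sub>R v) v \<le> 0" using c0 by (simp add: mult_nonneg_nonpos)
      then show ?thesis using fnn by linarith
    qed
  qed
  have g_int: "integrable lborel (\<lambda>v. finit (x - t *\<^sub>R v) v)"
    using C0 not_integrable_integral_eq by fastforce
  have f_meas: "(\<lambda>v. f x v t) \<in> borel_measurable lborel"
  proof -
    have m1: "(\<lambda>v. (1 + (norm v)\<^sup>2) * f x v t) \<in> borel_measurable lborel"
      using int by (rule borel_measurable_integrable)
    have m2: "(\<lambda>v::real^'n. inverse (1 + (norm v)\<^sup>2)) \<in> borel_measurable lborel" by measurable
    have "(\<lambda>v. inverse (1 + (norm v)\<^sup>2) * ((1 + (norm v)\<^sup>2) * f x v t)) \<in> borel_measurable lborel"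
      by (rule borel_measurable_times[OF m2 m1])
    moreover have "(\<lambda>v. inverse (1 + (norm v)\<^sup>2) * ((1 + (norm v)\<^sup>2) * f x v t)) = (\<lambda>v. f x v t)"
    proof
      fix v :: "real^'n"
      have "1 + (norm v)\<^sup>2 \<noteq> 0" by (smt (verit) zero_le_power2)
      then show "inverse (1 + (norm v)\<^sup>2) * ((1 + (norm v)\<^sup>2) * f x v t) = f x v t" by simp
    qed
    ultimately show ?thesis by simp
  qed
  have f_int: "integrable lborel (\<lambda>v. f x v t)"
  proof (rule Bochner_Integration.integrable_bound[OF int f_meas])
    show "AE v in lborel. norm (f x v t) \<le> norm ((1 + (norm v)\<^sup>2) * f x v t)"
    proof (intro AE_I2)
      fix v :: "real^'n"
      have fnn: "f x v t \<ge> 0" using fg t by blast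
      have "f x v t \<le> (1 + (norm v)\<^sup>2) * f x v t"
        using fnn by (simp add: mult_le_cancel_right1)
      then show "norm (f x v t) \<le> norm ((1 + (norm v)\<^sup>2) * f x v t)" using fnn by simp
    qed
  qed
  have "c * C0 \<le> c * (\<integral>v. finit (x - t *\<^sub>R v) v \<partial>lborel)"
    using C0 c0 by simp
  also have "\<dots> = (\<integral>v. c * finit (x - t *\<^sub>R v) v \<partial>lborel)" by simp
  also have "\<dots> \<le> ndens f x t"
    unfolding ndens_def using g_int f_int pt by (intro integral_mono) auto
  finally show ?thesis unfolding c_def by (simp add: mult.commute)
qed

theorem mainTheorem7:
  fixes m1 m2 \<epsilon> \<alpha> \<delta> \<gamma> \<nu>11 \<nu>12 \<nu>21 \<nu>22 C0 :: real
    and f10 f20 :: "real^'n::finite \<Rightarrow> real^'n \<Rightarrow> real"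
    and f1 f2 :: "real^'n \<Rightarrow> real^'n \<Rightarrow> real \<Rightarrow> real"
  assumes "m1 > 0" and "m2 > 0"
    and "0 < \<epsilon>" and "\<epsilon> \<le> 1"
    and "0 \<le> \<alpha>" and "\<alpha> \<le> 1"
    and "(m1 / m2 * \<epsilon> - 1) / (1 + m1 / m2 * \<epsilon>) \<le> \<delta>" and "\<delta> \<le> 1"
    and "0 \<le> \<gamma>"
    and "\<gamma> \<le> m1 / real CARD('n) * (1 - \<delta>) * ((1 + m1 / m2 * \<epsilon>) * \<delta> + 1 - m1 / m2 * \<epsilon>)"
    and "\<nu>11 > 0" and "\<nu>12 > 0" and "\<nu>21 > 0" and "\<nu>22 > 0"
    and "mild_solution m1 m2 \<epsilon> \<alpha> \<delta> \<gamma> \<nu>11 \<nu>12 \<nu>21 \<nu>22 f10 f20 f1 f2"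
    and "C0 > 0"
    and "\<forall>x t. t \<ge> 0 \<longrightarrow> (\<integral>v. f10 (x - t *\<^sub>R v) v \<partial>lborel) \<ge> C0"
    and "\<forall>x t. t \<ge> 0 \<longrightarrow> (\<integral>v. f20 (x - t *\<^sub>R v) v \<partial>lborel) \<ge> C0"
  shows "\<forall>x t. t \<ge> 0 \<longrightarrow>
           ndens f1 x t \<ge> C0 * exp (- (\<nu>11 + \<nu>12) * t) \<and>
           ndens f2 x t \<ge> C0 * exp (- (\<nu>22 + \<nu>21) * t)"
proof (intro allI impI conjI)
  fix x t :: "_" assume t: "(t::real) \<ge> 0"
  note ms = assms(15)[unfolded mild_solution_def]
  have fg1: "\<forall>x v t. t \<ge> 0 \<longrightarrow> f1 x v t \<ge> 0 \<and> f2 x v t \<ge> 0" using ms by blast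
  have fg2: "\<forall>x v t. t \<ge> 0 \<longrightarrow> f2 x v t \<ge> 0 \<and> f1 x v t \<ge> 0" using ms by blast
  have nn1: "\<And>x s. s \<ge> 0 \<Longrightarrow> ndens f1 x s \<ge> 0" using fg1 ndens_nonneg by blast
  have nn2: "\<And>x s. s \<ge> 0 \<Longrightarrow> ndens f2 x s \<ge> 0" using fg1 ndens_nonneg by blast
  show "ndens f1 x t \<ge> C0 * exp (- (\<nu>11 + \<nu>12) * t)"
    apply (rule key[where finit=f10])
    using ms apply blast
    using assms apply simp
    using assms apply simp
    using fg1 apply blast
    using nn1 Maxwell_nonneg apply blast
    using ms t apply blast
    using t apply simp
    using assms apply simp
    using assms t apply blast
    done
  show "ndens f2 x t \<ge> C0 * exp (- (\<nu>22 + \<nu>21) * t)"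
    apply (rule key[where finit=f20])
    using ms apply blast
    using assms apply simp
    using assms apply simp
    using fg2 apply blast
    using nn2 Maxwell_nonneg apply blast
    using ms t apply blast
    using t apply simp
    using assms apply simp
    using assms t apply blast
    done
qed

end
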